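(* Let $(X,d)$, $\mu$, $Y$ (countable), $f:X\to Y$ be as in the standing setting, fix an integer $K\ge2$, and let $\kappa:\mathbb{Z}^+\to\mathbb{Z}^+$ satisfy $\sum_{n=1}^\infty\rho^{\kappa(n)}=\infty$ for every $0<\rho\le1$. Let $\{z_n\}$ be generated by $\mathcal{S}(\kappa,\Phi)$ where $\Phi(x,S)=|V_S(x)|-\operatorname{modefreq}_f(V_S(x))$ with $V_S(x)$ the $K$-nearest neighbors of $x$ with respect to $S$. If $x\in X$ is contained in an $f$-contiguous component of positive $\mu$-measure, then $\zeta_n(x)\to f(x)$ with probability one.
   Context: Standing setting: $(X,d)$ metric space with probability measure $\mu$; $Y$ countable; $f:X\to Y$; $X_y=f^{-1}(y)$; $B_\epsilon(x)$ open ball; $\operatorname{supp}(\mu)=\{x:\mu(B_\epsilon(x))>0\ \forall\epsilon>0\}$. $b$ is an $f$-boundary point iff $\mu(B_\epsilon(b)\setminus X_{f(b)})>0$ for all $\epsilon>0$. $R\subseteq X$ is $f$-connected iff connected and $R\subseteq X_y$ for some $y$; $f$-contiguous iff $f$-connected, $R\subseteq\operatorname{supp}(\mu)$, and $R$ has no $f$-boundary points; an $f$-contiguous component is a maximal $f$-contiguous set. For finite $A$, $\operatorname{modefreq}_f(A)=\max_y|A\cap X_y|$ ($0$ if $A=\emptyset$). $K$-nearest neighbors: for finite $S\subseteq X$, let $\mathcal{V}_x$ be the family of $K$-element subsets $V\subseteq S$ minimizing distance to $x$ (i.e. no element outside $V$ is strictly closer to $x$ than some element of $V$); set $V_S(x)=\emptyset$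 if $x\in S$, and otherwise $V_S(x)=\arg\min_{V\in\mathcal{V}_x}\operatorname{modefreq}_f(V)$ (a minimizing set). Process $\mathcal{S}(\kappa,\Phi)$: $Z_0=\emptyset$; at step $n$ draw $\kappa(n)$ candidates i.i.d. from $\mu$, independent of the past; $z_n$ is a candidate maximizing $\Phi(\cdot,Z_{n-1})$ (ties uniformly at random); $Z_n=\{z_1,\dots,z_n\}$. Nearest neighbor prediction: $\zeta_n(x)=f(z_\iota)$, $\iota=\arg\min_{i\le n}d(x,z_i)$, ties uniformly at random. *)

theory Defs
  imports "HOL-Probability.Probability"
begin

definition in_supp :: "'a::metric_space measure \<Rightarrow> 'a \<Rightarrow> bool" where
  "in_supp M x \<longleftrightarrow> (\<forall>e>0. emeasure M (ball x e) > 0)"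

definition f_boundary :: "'a::metric_space measure \<Rightarrow> ('a \<Rightarrow> 'b) \<Rightarrow> 'a \<Rightarrow> bool" where
  "f_boundary M f b \<longleftrightarrow> (\<forall>e>0. emeasure M (ball b e - f -` {f b}) > 0)"

definition f_connected :: "('a::metric_space \<Rightarrow> 'b) \<Rightarrow> 'a set \<Rightarrow> bool" where
  "f_connected f R \<longleftrightarrow> connected R \<and> (\<exists>y. R \<subseteq> f -` {y})"

definition f_contiguous :: "'a::metric_space measure \<Rightarrow> ('a \<Rightarrow> 'b) \<Rightarrow> 'a set \<Rightarrow> bool" where
  "f_contiguous M f R \<longleftrightarrow>
     f_connected f R \<and> R \<subseteq> {x. in_supp M x} \<and> (\<forall>b\<in>R. \<not> f_boundary M f b)"

definition f_contiguous_component :: "'a::metric_space measure \<Rightarrow> ('a \<Rightarrow> 'b) \<Rightarrow> 'a set \<Rightarrow> bool" where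
  "f_contiguous_component M f R \<longleftrightarrow>
     f_contiguous M f R \<and> (\<forall>R'. f_contiguous M f R' \<and> R \<subseteq> R' \<longrightarrow> R' = R)"

definition modefreq :: "('a \<Rightarrow> 'b) \<Rightarrow> 'a set \<Rightarrow> nat" where
  "modefreq f A = (if A = {} then 0 else Max ((\<lambda>y. card (A \<inter> f -` {y})) ` f ` A))"

definition knn_family :: "nat \<Rightarrow> 'a::metric_space set \<Rightarrow> 'a \<Rightarrow> 'a set set" where
  "knn_family K S x = {V. V \<subseteq> S \<and> card V = min K (card S) \<and>
      (\<forall>v\<in>V. \<forall>s\<in>S - V. \<not> dist s x < dist v x)}"

definition knn :: "('a::metric_space \<Rightarrow> 'b) \<Rightarrow> nat \<Rightarrow> 'a set \<Rightarrow> 'a \<Rightarrow> 'a set" where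
  "knn f K S x = (if x \<in> S then {} else arg_min (modefreq f) (\<lambda>V. V \<in> knn_family K S x))"

definition Phi :: "('a::metric_space \<Rightarrow> 'b) \<Rightarrow> nat \<Rightarrow> 'a \<Rightarrow> 'a set \<Rightarrow> nat" where
  "Phi f K x S = card (knn f K S x) - modefreq f (knn f K S x)"

text \<open>Uniform choice of an element of a finite nonempty index set using u uniform on [0,1].\<close>
definition pick :: "real \<Rightarrow> nat set \<Rightarrow> nat" where
  "pick u I = sorted_list_of_set I ! min (nat \<lfloor>u * real (card I)\<rfloor>) (card I - 1)"

text \<open>Randomness of step n: candidate stream c (only c 0, ..., c (kappa n - 1) are used),
  a uniform tie-breaker u for the selection, and a uniform tie-breaker w for the prediction.\<close>
type_synonym 'a step = "(nat \<Rightarrow> 'a) \<times> real \<times> real"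

definition select :: "('a::metric_space \<Rightarrow> 'b) \<Rightarrow> nat \<Rightarrow> (nat \<Rightarrow> nat) \<Rightarrow> nat \<Rightarrow> 'a set \<Rightarrow> 'a step \<Rightarrow> 'a" where
  "select f K \<kappa> n S s =
     (let c = fst s; u = fst (snd s);
          m = Max ((\<lambda>i. Phi f K (c i) S) ` {..<\<kappa> n});
          I = {i. i < \<kappa> n \<and> Phi f K (c i) S = m}
      in c (pick u I))"

text \<open>pts n \<omega> = [z_1, ..., z_n].\<close>
primrec pts :: "('a::metric_space \<Rightarrow> 'b) \<Rightarrow> nat \<Rightarrow> (nat \<Rightarrow> nat) \<Rightarrow> nat \<Rightarrow> (nat \<Rightarrow> 'a step) \<Rightarrow> 'a list" where
  "pts f K \<kappa> 0 \<omega> = []"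
| "pts f K \<kappa> (Suc n) \<omega> = pts f K \<kappa> n \<omega> @ [select f K \<kappa> (Suc n) (set (pts f K \<kappa> n \<omega>)) (\<omega> (Suc n))]"

definition zeta :: "('a::metric_space \<Rightarrow> 'b) \<Rightarrow> nat \<Rightarrow> (nat \<Rightarrow> nat) \<Rightarrow> nat \<Rightarrow> 'a \<Rightarrow> (nat \<Rightarrow> 'a step) \<Rightarrow> 'b" where
  "zeta f K \<kappa> n x \<omega> =
     (let ps = pts f K \<kappa> n \<omega>;
          dm = Min ((\<lambda>i. dist x (ps ! i)) ` {..<n});
          I = {i. i < n \<and> dist x (ps ! i) = dm}
      in f (ps ! pick (snd (snd (\<omega> n))) I))"

definition step_measure :: "'a measure \<Rightarrow> 'a step measure" where
  "step_measure M = PiM UNIV (\<lambda>_::nat. M) \<Otimes>\<^sub>M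
     (uniform_measure lborel {0..1::real} \<Otimes>\<^sub>M uniform_measure lborel {0..1::real})"

definition process_space :: "'a measure \<Rightarrow> (nat \<Rightarrow> 'a step) measure" where
  "process_space M = PiM UNIV (\<lambda>_::nat. step_measure M)"

end

theory Submission imports Defs begin

lemma pick_in: assumes "finite I" "I \<noteq> {}" shows "pick u I \<in> I"
proof -
  have c: "card I \<ge> 1" using assms by (simp add: Suc_leI card_gt_0_iff)
  let ?k = "min (nat \<lfloor>u * real (card I)\<rfloor>) (card I - 1)"
  have "?k < length (sorted_list_of_set I)" using c assms by auto
  hence "sorted_list_of_set I ! ?k \<in> set (sorted_list_of_set I)" by (rule nth_mem)
  thus ?thesis using assms by (simp add: pick_def)
qed

lemma select_cand: assumes "\<kappa> n \<ge> 1"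
  shows "\<exists>i<\<kappa> n. select f K \<kappa> n S s = fst s i"
proof -
  define m where "m = Max ((\<lambda>i. Phi f K (fst s i) S) ` {..<\<kappa> n})"
  define I where "I = {i. i < \<kappa> n \<and> Phi f K (fst s i) S = m}"
  have ne: "{..<\<kappa> n} \<noteq> {}" using assms by (simp add: lessThan_empty_iff)
  have "m \<in> (\<lambda>i. Phi f K (fst s i) S) ` {..<\<kappa> n}" unfolding m_def
    using ne by (intro Max_in) auto
  hence "I \<noteq> {}" unfolding I_def by auto
  moreover have "finite I" unfolding I_def by auto
  ultimately have "pick (fst (snd s)) I \<in> I" using pick_in by blast
  hence "pick (fst (snd s)) I < \<kappa> n" unfolding I_def by auto
  moreover have "select f K \<kappa> n S s = fst s (pick (fst (snd s)) I)"
    unfolding select_def m_def I_def Let_def by simp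
  ultimately show ?thesis by blast
qed

lemma length_pts[simp]: "length (pts f K \<kappa> n \<omega>) = n"
  by (induction n) auto

lemma nth_pts: "j < n \<Longrightarrow> pts f K \<kappa> n \<omega> ! j = select f K \<kappa> (Suc j) (set (pts f K \<kappa> j \<omega>)) (\<omega> (Suc j))"
proof (induction n)
  case 0 then show ?case by simp
next
  case (Suc n)
  show ?case
  proof (cases "j < n")
    case True then show ?thesis using Suc by (simp add: nth_append)
  next
    case False then have "j = n" using Suc by simp
    then show ?thesis by (simp add: nth_append)
  qed
qed

lemma zeta_nn: assumes "n \<ge> 1"
  shows "\<exists>j<n. zeta f K \<kappa> n x \<omega> = f (pts f K \<kappa> n \<omega> ! j) \<and>
     (\<forall>k<n. dist x (pts f K \<kappa> n \<omega> ! j) \<le> dist x (pts f K \<kappa> n \<omega> ! k))"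
proof -
  define ps where "ps = pts f K \<kappa> n \<omega>"
  define dm where "dm = Min ((\<lambda>i. dist x (ps ! i)) ` {..<n})"
  define I where "I = {i. i < n \<and> dist x (ps ! i) = dm}"
  have ne: "{..<n} \<noteq> {}" using assms by (simp add: lessThan_empty_iff)
  have "dm \<in> (\<lambda>i. dist x (ps ! i)) ` {..<n}" unfolding dm_def
    using ne by (intro Min_in) auto
  hence "I \<noteq> {}" unfolding I_def by auto
  moreover have "finite I" unfolding I_def by auto
  ultimately have p: "pick (snd (snd (\<omega> n))) I \<in> I" using pick_in by blast
  have z: "zeta f K \<kappa> n x \<omega> = f (ps ! pick (snd (snd (\<omega> n))) I)"
    unfolding zeta_def ps_def dm_def I_def Let_def by simp
  have "\<forall>k<n. dist x (ps ! pick (snd (snd (\<omega> n))) I) \<le> dist x (ps ! k)"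
    using p unfolding I_def dm_def by auto
  with p z show ?thesis unfolding I_def ps_def by blast
qed

lemma det_main:
  assumes kap: "\<forall>n\<ge>1. \<kappa> n \<ge> 1" and e: "e > 0"
    and good: "\<forall>m i. fst (\<omega> m) i \<in> ball x e \<longrightarrow> f (fst (\<omega> m) i) = f x"
    and hit: "n0 \<ge> 1" "\<forall>i<\<kappa> n0. fst (\<omega> n0) i \<in> ball x e"
  shows "eventually (\<lambda>n. zeta f K \<kappa> n x \<omega> = f x) sequentially"
  unfolding eventually_sequentially
proof (intro exI allI impI)
  fix n assume "n0 \<le> n"
  then have n1: "n \<ge> 1" using hit by simp
  obtain j where j: "j < n" "zeta f K \<kappa> n x \<omega> = f (pts f K \<kappa> n \<omega> ! j)"
    "\<forall>k<n. dist x (pts f K \<kappa> n \<omega> ! j) \<le> dist x (pts f K \<kappa> n \<omega> ! k)"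
    using zeta_nn[OF n1] by blast
  have k: "n0 - 1 < n" using \<open>n0 \<le> n\<close> hit by simp
  obtain i where i: "i < \<kappa> n0" "pts f K \<kappa> n \<omega> ! (n0 - 1) = fst (\<omega> n0) i"
  proof -
    have "\<kappa> n0 \<ge> 1" using kap hit by simp
    from select_cand[of \<kappa> n0 f K "set (pts f K \<kappa> (n0 - 1) \<omega>)" "\<omega> n0", OF this]
    obtain i where "i < \<kappa> n0" "select f K \<kappa> n0 (set (pts f K \<kappa> (n0 - 1) \<omega>)) (\<omega> n0) = fst (\<omega> n0) i" by blast
    moreover have "Suc (n0 - 1) = n0" using hit by simp
    ultimately show ?thesis using that nth_pts[OF k, of f K \<kappa> \<omega>] by metis
  qed
  have d: "dist x (pts f K \<kappa> n \<omega> ! j) < e"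
    using j(3) k i hit by (metis mem_ball order_le_less_trans)
  obtain i' where i': "pts f K \<kappa> n \<omega> ! j = fst (\<omega> (Suc j)) i'"
    using nth_pts[OF j(1), of f K \<kappa> \<omega>] select_cand[of \<kappa> "Suc j"] kap by fastforce
  show "zeta f K \<kappa> n x \<omega> = f x" using j(2) d good i' by auto
qed

lemma unif_prob: "prob_space (uniform_measure lborel {0..1::real})"
  by (rule prob_space_uniform_measure) simp_all

lemma step_facts:
  assumes pM: "prob_space M" and spM: "space M = UNIV"
  shows "prob_space (step_measure M)" "space (step_measure M) = UNIV"
proof -
  have pQ: "prob_space (PiM UNIV (\<lambda>_::nat. M))" by (rule prob_space_PiM) (simp add: pM)
  show "prob_space (step_measure M)" unfolding step_measure_def
    by (intro prob_space_pair pQ unif_prob)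
  show "space (step_measure M) = UNIV" unfolding step_measure_def
    by (simp add: space_pair_measure space_PiM spM)
qed

lemma step_emb:
  assumes pM: "prob_space M" and spM: "space M = UNIV" and A: "A \<in> sets M" and J: "finite J"
  shows "{s. \<forall>i\<in>J. fst s i \<in> A} \<in> sets (step_measure M)"
    "emeasure (step_measure M) {s. \<forall>i\<in>J. fst s i \<in> A} = emeasure M A ^ card J"
proof -
  let ?Q = "PiM UNIV (\<lambda>_::nat. M)"
  let ?U = "uniform_measure lborel {0..1::real}"
  interpret UU: prob_space "?U \<Otimes>\<^sub>M ?U" by (intro prob_space_pair unif_prob)
  have spU: "space (?U \<Otimes>\<^sub>M ?U) = UNIV" by (simp add: space_pair_measure)
  have E: "{s. \<forall>i\<in>J. fst s i \<in> A} = prod_emb UNIV (\<lambda>_. M) J (PiE J (\<lambda>_. A)) \<times> space (?U \<Otimes>\<^sub>M ?U)"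
    by (auto simp: prod_emb_iff spM spU restrict_PiE_iff)
  have Es: "prod_emb UNIV (\<lambda>_. M) J (PiE J (\<lambda>_. A)) \<in> sets ?Q"
    using J A by (intro sets_PiM_I) auto
  show "{s. \<forall>i\<in>J. fst s i \<in> A} \<in> sets (step_measure M)"
    unfolding E step_measure_def by (intro pair_measureI Es sets.top)
  have "emeasure (step_measure M) {s. \<forall>i\<in>J. fst s i \<in> A}
      = emeasure ?Q (prod_emb UNIV (\<lambda>_. M) J (PiE J (\<lambda>_. A))) * emeasure (?U \<Otimes>\<^sub>M ?U) (space (?U \<Otimes>\<^sub>M ?U))"
    unfolding E step_measure_def by (rule UU.emeasure_pair_measure_Times[OF Es sets.top])
  also have "\<dots> = (\<Prod>i\<in>J. emeasure M A)"
    using J A pM by (simp add: emeasure_PiM_emb UU.emeasure_space_1)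
  finally show "emeasure (step_measure M) {s. \<forall>i\<in>J. fst s i \<in> A} = emeasure M A ^ card J"
    by simp
qed

lemma proc_emb:
  assumes pM: "prob_space M" and spM: "space M = UNIV" and G: "\<And>n. G n \<in> sets (step_measure M)"
    and J: "finite J"
  shows "{\<omega>. \<forall>n\<in>J. \<omega> n \<in> G n} \<in> sets (process_space M)"
    "emeasure (process_space M) {\<omega>. \<forall>n\<in>J. \<omega> n \<in> G n} = (\<Prod>n\<in>J. emeasure (step_measure M) (G n))"
proof -
  note sf = step_facts[OF pM spM]
  have E: "{\<omega>. \<forall>n\<in>J. \<omega> n \<in> G n} = prod_emb UNIV (\<lambda>_. step_measure M) J (PiE J G)"
    by (auto simp: prod_emb_iff sf restrict_PiE_iff)
  show "{\<omega>. \<forall>n\<in>J. \<omega> n \<in> G n} \<in> sets (process_space M)"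
    unfolding E process_space_def using J G by (intro sets_PiM_I) auto
  show "emeasure (process_space M) {\<omega>. \<forall>n\<in>J. \<omega> n \<in> G n} = (\<Prod>n\<in>J. emeasure (step_measure M) (G n))"
    unfolding E process_space_def using J G sf by (subst emeasure_PiM_emb) auto
qed

lemma null_part:
  assumes pM: "prob_space M" and spM: "space M = UNIV" and Bad: "Bad \<in> sets M" "emeasure M Bad = 0"
  shows "AE \<omega> in process_space M. \<forall>m i. fst (\<omega> m) i \<notin> Bad"
proof -
  have "AE \<omega> in process_space M. fst (\<omega> m) i \<notin> Bad" for m i
  proof (rule AE_I')
    let ?G = "\<lambda>_::nat. {s. \<forall>j\<in>{i}. fst s j \<in> Bad}"
    have G: "?G n \<in> sets (step_measure M)" for n using step_emb(1)[OF pM spM Bad(1), of "{i}"] by simp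
    show "{\<omega>. \<forall>n\<in>{m}. \<omega> n \<in> ?G n} \<in> null_sets (process_space M)"
      using proc_emb[OF pM spM G, of "{m}"] step_emb[OF pM spM Bad(1), of "{i}"] Bad(2)
      by (intro null_setsI) auto
    show "{\<omega> \<in> space (process_space M). \<not> fst (\<omega> m) i \<notin> Bad} \<subseteq> {\<omega>. \<forall>n\<in>{m}. \<omega> n \<in> ?G n}"
      by auto
  qed
  then show ?thesis by (simp add: AE_all_countable)
qed

lemma hit_part:
  fixes M :: "'a measure"
  assumes pM: "prob_space M" and spM: "space M = UNIV" and B: "B \<in> sets M"
    and pos: "measure M B > 0"
    and ns: "\<not> summable (\<lambda>n. (measure M B) ^ \<kappa> (Suc n))"
  shows "AE \<omega> in process_space M. \<exists>n\<ge>1. \<forall>i<\<kappa> n. fst (\<omega> n) i \<in> B"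
proof -
  interpret M: prob_space M by (rule pM)
  note sf = step_facts[OF pM spM]
  interpret S: prob_space "step_measure M" by (rule sf(1))
  interpret P: prob_space "process_space M" unfolding process_space_def
    by (rule prob_space_PiM) (simp add: sf)
  define \<rho> where "\<rho> = measure M B"
  have r0: "0 < \<rho>" and r1: "\<rho> \<le> 1" using pos by (auto simp: \<rho>_def)
  define G where "G n = {s::'a step. \<forall>i\<in>{..<\<kappa> n}. fst s i \<in> B}" for n
  define H where "H n = space (step_measure M) - G n" for n
  have Gs: "G n \<in> sets (step_measure M)" for n unfolding G_def by (rule step_emb[OF pM spM B]) simp
  have Hs: "H n \<in> sets (step_measure M)" for n unfolding H_def using Gs by auto
  have mG: "measure (step_measure M) (G n) = \<rho> ^ \<kappa> n" for n
  proof -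
    have "ennreal \<rho> ^ \<kappa> n = ennreal (\<rho> ^ \<kappa> n)" using r0 by (simp add: ennreal_power)
    then show ?thesis
      unfolding measure_def G_def step_emb(2)[OF pM spM B finite_lessThan]
      using r0 by (simp add: M.emeasure_eq_measure \<rho>_def)
  qed
  have eH: "emeasure (step_measure M) (H n) = ennreal (1 - \<rho> ^ \<kappa> n)" for n
    unfolding H_def using Gs by (simp add: S.emeasure_eq_measure S.prob_compl mG)
  define C where "C N = {\<omega>. \<forall>n\<in>{1..N}. \<omega> n \<in> H n}" for N
  have Cs: "C N \<in> sets (process_space M)" for N unfolding C_def by (rule proc_emb[OF pM spM Hs]) simp
  define a where "a n = \<rho> ^ \<kappa> (Suc n)" for n
  have a0: "0 \<le> a n" and a1: "a n \<le> 1" for n unfolding a_def using r0 r1 by (auto intro: power_le_one)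
  have mC: "measure (process_space M) (C N) \<le> exp (- (\<Sum>n<N. a n))" for N
  proof -
    have "emeasure (process_space M) (C N) = (\<Prod>n\<in>{1..N}. ennreal (1 - \<rho> ^ \<kappa> n))"
      unfolding C_def proc_emb(2)[OF pM spM Hs finite_atLeastAtMost] eH ..
    also have "\<dots> = ennreal (\<Prod>n\<in>{1..N}. (1 - \<rho> ^ \<kappa> n))"
      using r0 r1 by (intro prod_ennreal) (auto intro: power_le_one)
    finally have "measure (process_space M) (C N) = (\<Prod>n\<in>{1..N}. (1 - \<rho> ^ \<kappa> n))"
      using r0 r1 by (simp add: P.emeasure_eq_measure prod_nonneg power_le_one)
    also have "\<dots> = (\<Prod>n<N. (1 - a n))" unfolding a_def
      by (simp add: prod.atLeast1_atMost_eq)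
    also have "\<dots> \<le> (\<Prod>n<N. exp (- a n))"
      using a0 a1 by (intro prod_mono) (auto, metis exp_ge_add_one_self add_uminus_conv_diff)
    also have "\<dots> = exp (- (\<Sum>n<N. a n))" by (simp add: exp_sum sum_negf[symmetric])
    finally show ?thesis .
  qed
  define D where "D = (\<Inter>N. C N)"
  have Ds: "D \<in> sets (process_space M)" unfolding D_def using Cs by auto
  have mD: "measure (process_space M) D \<le> exp (- (\<Sum>n<N. a n))" for N
  proof -
    have "measure (process_space M) D \<le> measure (process_space M) (C N)"
      unfolding D_def using Cs by (intro P.finite_measure_mono) auto
    with mC[of N] show ?thesis by linarith
  qed
  have mD0: "measure (process_space M) D = 0"
  proof (rule ccontr)
    assume "measure (process_space M) D \<noteq> 0"
    then have d: "measure (process_space M) D > 0" by (simp add: order_less_le)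
    have "\<exists>N. - ln (measure (process_space M) D) < (\<Sum>n<N. a n)"
    proof (rule ccontr)
      assume "\<not> ?thesis"
      then have "(\<Sum>n<N. a n) \<le> - ln (measure (process_space M) D)" for N by (simp add: not_less)
      then have "summable a" by (intro summableI_nonneg_bounded[OF a0])
      then show False using ns unfolding a_def \<rho>_def by simp
    qed
    then obtain N where N: "- ln (measure (process_space M) D) < (\<Sum>n<N. a n)" by blast
    have "exp (- (\<Sum>n<N. a n)) < exp (ln (measure (process_space M) D))"
      using N by simp
    with mD[of N] d show False by simp
  qed
  show ?thesis
  proof (rule AE_I')
    show "D \<in> null_sets (process_space M)"
      using Ds mD0 by (simp add: P.emeasure_eq_measure null_setsI)
    show "{\<omega> \<in> space (process_space M). \<not> (\<exists>n\<ge>1. \<forall>i<\<kappa> n. fst (\<omega> n) i \<in> B)} \<subseteq> D"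
      unfolding D_def C_def H_def G_def by (auto simp: sf)
  qed
qed

theorem theorem6:
  fixes M :: "'a::metric_space measure" and f :: "'a \<Rightarrow> 'b::countable"
    and K :: nat and \<kappa> :: "nat \<Rightarrow> nat" and x :: 'a and R :: "'a set"
  assumes "prob_space M"
    and "sets M = sets borel"
    and "\<forall>y. f -` {y} \<in> sets M"
    and "K \<ge> 2"
    and "\<forall>n\<ge>1. \<kappa> n \<ge> 1"
    and "\<forall>\<rho>::real. 0 < \<rho> \<and> \<rho> \<le> 1 \<longrightarrow> \<not> summable (\<lambda>n. \<rho> ^ \<kappa> (Suc n))"
    and "f_contiguous_component M f R"
    and "x \<in> R"
    and "R \<in> sets M"
    and "emeasure M R > 0"
  shows "AE \<omega> in process_space M. eventually (\<lambda>n. zeta f K \<kappa> n x \<omega> = f x) sequentially"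
proof -
  note pM = assms(1)
  interpret M: prob_space M by (rule pM)
  have spM: "space M = UNIV" using sets_eq_imp_space_eq[OF assms(2)] by simp
  have supp: "in_supp M x" and nb: "\<not> f_boundary M f x"
    using assms(7,8) unfolding f_contiguous_component_def f_contiguous_def by auto
  obtain e where e: "e > 0" "\<not> emeasure M (ball x e - f -` {f x}) > 0"
    using nb unfolding f_boundary_def by auto
  define Bad where "Bad = ball x e - f -` {f x}"
  have Bs: "ball x e \<in> sets M" using assms(2) by simp
  have Bads: "Bad \<in> sets M" unfolding Bad_def using Bs assms(3) by auto
  have Bad0: "emeasure M Bad = 0" using e(2) unfolding Bad_def by (simp add: not_less)
  have pos: "measure M (ball x e) > 0"
    using supp e(1) unfolding in_supp_def by (simp add: M.emeasure_eq_measure)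
  have ns: "\<not> summable (\<lambda>n. (measure M (ball x e)) ^ \<kappa> (Suc n))"
    using assms(6) pos M.prob_le_1 by blast
  have "AE \<omega> in process_space M. (\<forall>m i. fst (\<omega> m) i \<notin> Bad) \<and> (\<exists>n\<ge>1. \<forall>i<\<kappa> n. fst (\<omega> n) i \<in> ball x e)"
    using null_part[OF pM spM Bads Bad0] hit_part[OF pM spM Bs pos ns] by eventually_elim auto
  then show ?thesis
  proof eventually_elim
    case (elim \<omega>)
    then obtain n0 where "n0 \<ge> 1" "\<forall>i<\<kappa> n0. fst (\<omega> n0) i \<in> ball x e" by blast
    moreover have "\<forall>m i. fst (\<omega> m) i \<in> ball x e \<longrightarrow> f (fst (\<omega> m) i) = f x"
      using elim unfolding Bad_def by auto
    ultimately show ?case using det_main[OF assms(5) e(1)] by blast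
  qed
qed

end
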